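(* Let $D_6=\langle r,s\mid r^6=s^2=1,\ srs=r^{-1}\rangle$ be the dihedral group of order $12$. Its subgroups up to conjugacy are $\{1\}$, three classes of subgroups of order 2, $C_2^{(1)},C_2^{(2)},C_2^{(3)}$ (represented by $\langle r^3\rangle,\langle s\rangle,\langle rs\rangle$), $C_3=\langle r^2\rangle$, $C_2^2=\langle r^3,s\rangle$, $C_6=\langle r\rangle$, two classes of subgroups isomorphic to $S_3$, $S_3^{(1)}=\langle r^2,s\rangle$ and $S_3^{(2)}=\langle r^2,rs\rangle$, and $D_6$. Then there is an isomorphism of $D_6$-lattices $$\mathbb{Z}[D_6]\oplus\mathbb{Z}[D_6/C_2^2]^{\oplus2}\oplus\mathbb{Z}[D_6/C_6]\oplus\mathbb{Z}[D_6/S_3^{(1)}]\oplus\mathbb{Z}[D_6/S_3^{(2)}]\simeq\mathbb{Z}[D_6/C_2^{(1)}]\oplus\mathbb{Z}[D_6/C_2^{(2)}]\oplus\mathbb{Z}[D_6/C_2^{(3)}]\oplus\mathbb{Z}[D_6/C_3]\oplus\mathbb{Z}^{\oplus2}.$$ In particular the Krull–Schmidt theorem fails for permutation $D_6$-lattices. *)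

theory Defs
  imports "HOL-Algebra.Algebra"
begin

text \<open>Element (a, e) with a in {0..5} stands for r^a s^e (e = True means s^1).
  Multiplication: r^a s^e * r^b s^f = r^(a + (-1)^e b) s^(e xor f).\<close>

definition D6_mult :: "int \<times> bool \<Rightarrow> int \<times> bool \<Rightarrow> int \<times> bool" where
  "D6_mult x y = ((fst x + (if snd x then - fst y else fst y)) mod 6, snd x \<noteq> snd y)"

definition D6 :: "(int \<times> bool) monoid" where
  "D6 = \<lparr> partial_object.carrier = {0..5} \<times> (UNIV :: bool set), monoid.mult = D6_mult, monoid.one = (0, False) \<rparr>"

definition rD6 :: "int \<times> bool" where "rD6 = (1, False)"
definition sD6 :: "int \<times> bool" where "sD6 = (0, True)"

definition left_cosets :: "('a, 'b) monoid_scheme \<Rightarrow> 'a set \<Rightarrow> 'a set set" where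
  "left_cosets G H = {g <#\<^bsub>G\<^esub> H | g. g \<in> carrier G}"

text \<open>The G-set  G/H_0 \<squnion> ... \<squnion> G/H_(k-1)  for a list of subgroups Hs,
  realised as pairs (index, coset).\<close>
definition perm_set :: "('a, 'b) monoid_scheme \<Rightarrow> 'a set list \<Rightarrow> (nat \<times> 'a set) set" where
  "perm_set G Hs = {(i, C). i < length Hs \<and> C \<in> left_cosets G (Hs ! i)}"

text \<open>The permutation lattice Z[G/H_0] \<oplus> ... \<oplus> Z[G/H_(k-1)]: integer-valued
  functions on the (finite) G-set, extended by zero.\<close>
definition perm_lattice :: "('a, 'b) monoid_scheme \<Rightarrow> 'a set list \<Rightarrow> (nat \<times> 'a set \<Rightarrow> int) set" where
  "perm_lattice G Hs = {f. \<forall>x. x \<notin> perm_set G Hs \<longrightarrow> f x = 0}"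

definition perm_act ::
  "('a, 'b) monoid_scheme \<Rightarrow> 'a set list \<Rightarrow> 'a \<Rightarrow> (nat \<times> 'a set \<Rightarrow> int) \<Rightarrow> (nat \<times> 'a set \<Rightarrow> int)" where
  "perm_act G Hs g f = (\<lambda>(i, C). if (i, C) \<in> perm_set G Hs
                                  then f (i, (inv\<^bsub>G\<^esub> g) <#\<^bsub>G\<^esub> C) else 0)"

definition lattice_iso ::
  "('a, 'b) monoid_scheme \<Rightarrow> 'a set list \<Rightarrow> 'a set list
     \<Rightarrow> ((nat \<times> 'a set \<Rightarrow> int) \<Rightarrow> (nat \<times> 'a set \<Rightarrow> int)) \<Rightarrow> bool" where
  "lattice_iso G Hs Ks \<phi> \<longleftrightarrow>
     bij_betw \<phi> (perm_lattice G Hs) (perm_lattice G Ks) \<and>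
     (\<forall>f \<in> perm_lattice G Hs. \<forall>h \<in> perm_lattice G Hs. \<phi> (\<lambda>x. f x + h x) = (\<lambda>x. \<phi> f x + \<phi> h x)) \<and>
     (\<forall>c::int. \<forall>f \<in> perm_lattice G Hs. \<phi> (\<lambda>x. c * f x) = (\<lambda>x. c * \<phi> f x)) \<and>
     (\<forall>g \<in> carrier G. \<forall>f \<in> perm_lattice G Hs. \<phi> (perm_act G Hs g f) = perm_act G Ks g (\<phi> f))"

definition isomorphic_lattices :: "('a, 'b) monoid_scheme \<Rightarrow> 'a set list \<Rightarrow> 'a set list \<Rightarrow> bool" where
  "isomorphic_lattices G Hs Ks \<longleftrightarrow> (\<exists>\<phi>. lattice_iso G Hs Ks \<phi>)"

end

theory Submission
  imports Defs
begin

type_synonym el = "int \<times> bool"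

lemma D6_simps[simp]: "monoid.mult D6 = D6_mult" "one D6 = (0,False)"
  by (simp_all add: D6_def)

lemma D6_carrier: "carrier D6 = {0..5} \<times> UNIV"
  by (simp add: D6_def)

definition cl :: "(int \<times> bool) list" where "cl = [(0,False), (1,False), (0,True), (2,False), (1,True), (5,True), (3,False), (2,True), (4,True), (5,False), (4,False), (3,True)]"

definition pHr :: "nat list" where "pHr = [10, 11, 0, 1, 2, 3, 4, 5, 6, 7, 8, 9, 14, 12, 13, 17, 15, 16, 18, 19, 21, 20, 23, 22]"

definition pKr :: "nat list" where "pKr = [4, 5, 0, 1, 2, 3, 11, 6, 7, 8, 9, 10, 13, 17, 12, 14, 15, 16, 20, 21, 18, 19, 22, 23]"

definition pHs :: "nat list" where "pHs = [1, 0, 11, 10, 9, 8, 7, 6, 5, 4, 3, 2, 12, 14, 13, 15, 17, 16, 19, 18, 20, 21, 23, 22]"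

definition pKs :: "nat list" where "pKs = [1, 0, 5, 4, 3, 2, 6, 11, 10, 9, 8, 7, 13, 12, 17, 16, 15, 14, 19, 18, 21, 20, 22, 23]"

definition hl :: "(int \<times> bool) list list" where "hl = [[(0,False)], [(0,False), (3,False), (0,True), (3,True)], [(0,False), (3,False), (0,True), (3,True)], [(0,False), (1,False), (2,False), (3,False), (4,False), (5,False)], [(0,False), (2,False), (0,True), (4,False), (2,True), (4,True)], [(0,False), (2,False), (1,True), (4,False), (3,True), (5,True)]]"

definition kl :: "(int \<times> bool) list list" where "kl = [[(0,False), (3,False)], [(0,False), (0,True)], [(0,False), (1,True)], [(0,False), (2,False), (4,False)], [(0,False), (1,False), (0,True), (2,False), (1,True), (5,True), (3,False), (2,True), (4,True), (5,False), (4,False), (3,True)], [(0,False), (1,False), (0,True), (2,False), (1,True), (5,True), (3,False), (2,True), (4,True), (5,False), (4,False), (3,True)]]"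

definition repH :: "(nat \<times> (int \<times> bool)) list" where "repH = [(0,(0,False)), (0,(0,True)), (0,(1,False)), (0,(1,True)), (0,(2,False)), (0,(2,True)), (0,(3,False)), (0,(3,True)), (0,(4,False)), (0,(4,True)), (0,(5,False)), (0,(5,True)), (1,(0,False)), (1,(1,False)), (1,(2,False)), (2,(0,False)), (2,(1,False)), (2,(2,False)), (3,(0,False)), (3,(0,True)), (4,(0,False)), (4,(1,False)), (5,(0,False)), (5,(0,True))]"

definition repK :: "(nat \<times> (int \<times> bool)) list" where "repK = [(0,(0,False)), (0,(0,True)), (0,(1,False)), (0,(1,True)), (0,(2,False)), (0,(2,True)), (1,(0,False)), (1,(1,False)), (1,(2,False)), (1,(3,False)), (1,(4,False)), (1,(5,False)), (2,(0,False)), (2,(0,True)), (2,(1,False)), (2,(2,False)), (2,(3,False)), (2,(4,False)), (3,(0,False)), (3,(0,True)), (3,(1,False)), (3,(1,True)), (4,(0,False)), (5,(0,False))]"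

definition MM :: "int list list" where "MM = [[-1, -1, 1, -2, 0, -2, -1, -1, 1, -2, 0, -2, 1, 2, 1, -1, 2, 0, 2, -1, 0, 0, -2, -2], [-1, -1, -2, 0, -2, 1, -1, -1, -2, 0, -2, 1, 1, 1, 2, -1, 0, 2, -1, 2, 0, 0, -2, -2], [0, -2, -1, -1, 1, -2, 0, -2, -1, -1, 1, -2, 1, 1, 2, 0, -1, 2, 2, -1, 0, 0, -2, -2], [-2, 1, -1, -1, -2, 0, -2, 1, -1, -1, -2, 0, 2, 1, 1, 2, -1, 0, -1, 2, 0, 0, -2, -2], [1, -2, 0, -2, -1, -1, 1, -2, 0, -2, -1, -1, 2, 1, 1, 2, 0, -1, 2, -1, 0, 0, -2, -2], [-2, 0, -2, 1, -1, -1, -2, 0, -2, 1, -1, -1, 1, 2, 1, 0, 2, -1, -1, 2, 0, 0, -2, -2], [0, 0, 0, 0, 0, -1, 0, 0, -1, 0, 0, 0, -1, -1, -1, -1, -2, -2, 0, 0, 0, 1, 1, 1], [0, 0, 0, 0, 0, 0, 0, -1, 0, 0, -1, 0, -1, -1, -1, -2, -1, -2, 0, 0, 1, 0, 1, 1], [-1, 0, 0, 0, 0, 0, 0, 0, 0, -1, 0, 0, -1, -1, -1, -2, -2, -1, 0, 0, 0, 1, 1, 1], [0, 0, -1, 0, 0, 0, 0, 0, 0, 0, 0, -1, -1, -1, -1, -1, -2, -2, 0, 0, 1, 0, 1, 1], [0, -1, 0, 0, -1, 0, 0, 0, 0, 0, 0, 0, -1, -1, -1, -2, -1, -2, 0,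 0, 0, 1, 1, 1], [0, 0, 0, -1, 0, 0, -1, 0, 0, 0, 0, 0, -1, -1, -1, -2, -2, -1, 0, 0, 1, 0, 1, 1], [1, 1, 1, 1, 0, -2, -1, 2, 2, -1, -2, 0, 1, 1, 1, 2, 2, -1, 0, 0, -1, -1, 2, 1], [1, 1, 0, -2, -1, 2, 2, -1, -2, 0, 1, 1, 1, 1, 1, 2, -1, 2, 0, 0, -1, -1, 1, 2], [-2, 0, 1, 1, 1, 1, 0, -2, -1, 2, 2, -1, 1, 1, 1, -1, 2, 2, 0, 0, -1, -1, 1, 2], [2, -1, -2, 0, 1, 1, 1, 1, 0, -2, -1, 2, 1, 1, 1, 2, -1, 2, 0, 0, -1, -1, 2, 1], [-1, 2, 2, -1, -2, 0, 1, 1, 1, 1, 0, -2, 1, 1, 1, 2, 2, -1, 0, 0, -1, -1, 1, 2], [0, -2, -1, 2, 2, -1, -2, 0, 1, 1, 1, 1, 1, 1, 1, -1, 2, 2, 0, 0, -1, -1, 2, 1], [-1, 1, 2, 1, -1, 1, 2, 1, -1, 1, 2, 1, 0, 0, 0, 0, 0, 0, 0, 1, -2, 2, 1, 2], [1, -1, 1, 2, 1, -1, 1, 2, 1, -1, 1, 2, 0, 0, 0, 0, 0, 0, 1, 0, -2, 2, 2, 1], [2, 1, -1, 1, 2, 1, -1, 1, 2, 1, -1, 1, 0, 0, 0, 0, 0, 0, 0, 1, 2, -2, 2, 1], [1, 2, 1, -1, 1, 2, 1, -1, 1, 2, 1, -1, 0, 0, 0, 0, 0, 0, 1, 0, 2,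 -2, 1, 2], [2, 2, 2, 2, 2, 2, 2, 2, 2, 2, 2, 2, 1, 1, 1, 2, 2, 2, 2, 2, 1, 1, -2, -2], [0, 0, 0, 0, 0, 0, 0, 0, 0, 0, 0, 0, 0, 0, 0, 1, 1, 1, -1, -1, -1, -1, 1, 1]]"

definition NN :: "int list list" where "NN = [[-5, -4, 1, -3, 0, 2, -5, 0, 5, -6, 2, 4, 3, 2, 1, 2, 2, 1, -3, -5, -3, -4, 1, -10], [-4, -5, 2, 0, -3, 1, -5, 4, 2, -6, 5, 0, 2, 3, 1, 2, 2, 1, -5, -3, -4, -3, 1, -10], [0, 2, -5, -4, 1, -3, 4, -5, 0, 5, -6, 2, 2, 1, 3, 1, 2, 2, -3, -4, -3, -5, 1, -10], [-3, 1, -4, -5, 2, 0, 0, -5, 4, 2, -6, 5, 3, 1, 2, 1, 2, 2, -4, -3, -5, -3, 1, -10], [1, -3, 0, 2, -5, -4, 2, 4, -5, 0, 5, -6, 1, 2, 2, 3, 1, 2, -3, -5, -3, -4, 1, -10], [2, 0, -3, 1, -4, -5, 5, 0, -5, 4, 2, -6, 1, 2, 3, 2, 1, 2, -5, -3, -4, -3, 1, -10], [-5, -4, 1, -3, 0, 2, -6, 2, 4, -5, 0, 5, 2, 2, 1, 2, 3, 1, -3, -4, -3, -5, 1, -10], [-4, -5, 2, 0, -3, 1, -6, 5, 0, -5, 4, 2, 2, 2, 1, 3, 2, 1, -4, -3, -5, -3, 1, -10], [0, 2, -5, -4, 1, -3, 5, -6, 2, 4, -5, 0, 2, 1, 2,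 1, 2, 3, -3, -5, -3, -4, 1, -10], [-3, 1, -4, -5, 2, 0, 2, -6, 5, 0, -5, 4, 2, 1, 2, 1, 3, 2, -5, -3, -4, -3, 1, -10], [1, -3, 0, 2, -5, -4, 0, 5, -6, 2, 4, -5, 1, 3, 2, 2, 1, 2, -3, -4, -3, -5, 1, -10], [2, 0, -3, 1, -4, -5, 4, 2, -6, 5, 0, -5, 1, 2, 2, 2, 1, 3, -4, -3, -5, -3, 1, -10], [-12, -12, 9, -1, -1, 9, -21, 8, 8, -21, 8, 8, 2, 2, -2, 2, 2, -2, -1, -1, -1, -1, -3, -12], [-1, 9, -12, -12, 9, -1, 8, -21, 8, 8, -21, 8, 2, -2, 2, -2, 2, 2, -1, -1, -1, -1, -3, -12], [9, -1, -1, 9, -12, -12, 8, 8, -21, 8, 8, -21, -2, 2, 2, 2, -2, 2, -1, -1, -1, -1, -3, -12], [10, 10, 0, 5, 5, 0, 9, -5, -5, 9, -5, -5, -7, -7, -5, -7, -7, -5, 13, 13, 13, 13, -4, 33], [5, 0, 10, 10, 0, 5, -5, 9, -5, -5, 9, -5, -7, -5, -7, -5, -7, -7, 13, 13, 13, 13, -4, 33], [0, 5, 5, 0, 10, 10, -5, -5, 9, -5, -5, 9, -5, -7, -7, -7, -5, -7, 13, 13, 13, 13, -4, 33], [1, 2, 1, 2, 1, 2, 3, 3, 3, 3, 3, 3, 0, 0, 0, 0, 0, 0, -3, 2, -3, 2, 6, 15], [2, 1, 2, 1, 2, 1, 3, 3, 3, 3, 3, 3, 0, 0, 0, 0, 0,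 0, 2, -3, 2, -3, 6, 15], [10, 10, 10, 10, 10, 10, -6, -3, -6, -3, -6, -3, -15, -15, -15, -15, -15, -15, 32, 32, 31, 31, -17, 59], [10, 10, 10, 10, 10, 10, -3, -6, -3, -6, -3, -6, -15, -15, -15, -15, -15, -15, 31, 31, 32, 32, -17, 59], [4, 4, 4, 4, 4, 4, -1, -1, -1, -1, -1, -1, -7, -4, -4, -7, -4, -7, 9, 14, 14, 9, -5, 25], [4, 4, 4, 4, 4, 4, -1, -1, -1, -1, -1, -1, -4, -7, -7, -4, -7, -4, 14, 9, 9, 14, -5, 25]]"
lemma int05: "{0..5::int} = {0,1,2,3,4,5}" by auto

lemma carrier_cl: "carrier D6 = set cl"
  by (auto simp: cl_def int05 D6_carrier)

definition chkassoc :: bool where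
  "chkassoc = list_all (\<lambda>x. list_all (\<lambda>y. list_all (\<lambda>z. D6_mult (D6_mult x y) z = D6_mult x (D6_mult y z)) cl) cl) cl"

lemma chkassoc: chkassoc by code_simp

definition chkinv :: bool where
  "chkinv = list_all (\<lambda>x. list_ex (\<lambda>y. D6_mult y x = (0,False)) cl) cl"
lemma chkinv: chkinv by code_simp

lemma D6_mult_closed: "D6_mult x y \<in> {0..5} \<times> UNIV"
  by (auto simp: D6_mult_def)

lemma group_D6: "group D6"
proof (rule groupI)
  fix x y z assume "x \<in> carrier D6" "y \<in> carrier D6" "z \<in> carrier D6"
  then show "x \<otimes>\<^bsub>D6\<^esub> y \<otimes>\<^bsub>D6\<^esub> z = x \<otimes>\<^bsub>D6\<^esub> (y \<otimes>\<^bsub>D6\<^esub> z)"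
    using chkassoc unfolding chkassoc_def carrier_cl by (simp add: list_all_iff)
next
  fix x assume "x \<in> carrier D6"
  then show "\<exists>y\<in>carrier D6. y \<otimes>\<^bsub>D6\<^esub> x = \<one>\<^bsub>D6\<^esub>"
    using chkinv unfolding chkinv_def carrier_cl by (simp add: list_all_iff list_ex_iff)
next
  fix x assume "x \<in> carrier D6" then show "\<one>\<^bsub>D6\<^esub> \<otimes>\<^bsub>D6\<^esub> x = x"
    by (cases x) (auto simp: D6_mult_def D6_carrier)
qed (auto simp: D6_mult_def D6_carrier)

interpretation D: group D6 by (rule group_D6)


definition inco :: "el \<Rightarrow> el \<Rightarrow> el list \<Rightarrow> bool" where
  "inco x b H \<longleftrightarrow> x \<in> set (map (D6_mult b) H)"

lemma inco_iff: "inco x b H \<longleftrightarrow> x \<in> b <#\<^bsub>D6\<^esub> set H"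
  by (auto simp: inco_def l_coset_def)

definition ee :: "el list list \<Rightarrow> (nat \<times> el) list \<Rightarrow> nat \<Rightarrow> nat \<times> el set" where
  "ee L R k = (fst (R!k), snd (R!k) <#\<^bsub>D6\<^esub> set (L ! fst (R!k)))"

definition good :: "el list list \<Rightarrow> (nat \<times> el) list \<Rightarrow> bool" where
  "good L R \<longleftrightarrow> (\<forall>i<length L. subgroup (set (L!i)) D6) \<and>
     (\<forall>k<length R. fst (R!k) < length L \<and> snd (R!k) \<in> carrier D6) \<and>
     (\<forall>i<length L. \<forall>g\<in>carrier D6. \<exists>k<length R. fst (R!k) = i \<and> inco g (snd (R!k)) (L!i)) \<and>
     (\<forall>k<length R. \<forall>k'<length R. k \<noteq> k' \<longrightarrow> fst (R!k) = fst (R!k') \<longrightarrow>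
         \<not> inco (snd (R!k)) (snd (R!k')) (L ! fst (R!k)))"

lemma good_PS:
  assumes "good L R"
  shows "perm_set D6 (map set L) = ee L R ` {0..<length R}"
proof
  show "perm_set D6 (map set L) \<subseteq> ee L R ` {0..<length R}"
  proof
    fix y assume "y \<in> perm_set D6 (map set L)"
    then obtain i g where y: "y = (i, g <#\<^bsub>D6\<^esub> set (L!i))" and i: "i < length L" and g: "g \<in> carrier D6"
      by (auto simp: perm_set_def left_cosets_def)
    from assms i g obtain k where k: "k < length R" "fst (R!k) = i" "inco g (snd (R!k)) (L!i)"
      unfolding good_def by blast
    have sg: "subgroup (set (L!i)) D6" using assms i by (auto simp: good_def)
    have rc: "snd (R!k) \<in> carrier D6" using assms k by (auto simp: good_def)
    have "snd (R!k) <#\<^bsub>D6\<^esub> set (L!i) = g <#\<^bsub>D6\<^esub> set (L!i)"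
      using D.l_repr_independence[OF _ rc sg] k(3) by (simp add: inco_iff)
    then have "y = ee L R k" using y k by (simp add: ee_def)
    then show "y \<in> ee L R ` {0..<length R}" using k by auto
  qed
next
  show "ee L R ` {0..<length R} \<subseteq> perm_set D6 (map set L)"
  proof
    fix y assume "y \<in> ee L R ` {0..<length R}"
    then obtain k where k: "k < length R" "y = ee L R k" by auto
    then have "fst (R!k) < length L" "snd (R!k) \<in> carrier D6" using assms by (auto simp: good_def)
    then show "y \<in> perm_set D6 (map set L)" unfolding perm_set_def left_cosets_def k(2) ee_def
      by (simp, metis prod.collapse)
  qed
qed

lemma good_inj:
  assumes "good L R"
  shows "inj_on (ee L R) {0..<length R}"
proof (rule inj_onI)
  fix k k' assume k: "k \<in> {0..<length R}" and k': "k' \<in> {0..<length R}" and eq: "ee L R k = ee L R k'"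
  show "k = k'"
  proof (rule ccontr)
    assume ne: "k \<noteq> k'"
    from eq have f: "fst (R!k) = fst (R!k')" by (simp add: ee_def)
    let ?i = "fst (R!k)"
    have sg: "subgroup (set (L!?i)) D6" using assms k by (auto simp: good_def)
    have rc: "snd (R!k) \<in> carrier D6" using assms k by (auto simp: good_def)
    have "snd (R!k) \<in> snd (R!k) <#\<^bsub>D6\<^esub> set (L!?i)"
      using subgroup.one_closed[OF sg] D.r_one[OF rc] unfolding l_coset_def by force
    also have "\<dots> = snd (R!k') <#\<^bsub>D6\<^esub> set (L!?i)" using eq f by (simp add: ee_def)
    finally have "inco (snd (R!k)) (snd (R!k')) (L!?i)" by (simp add: inco_iff)
    then show False using assms k k' ne f unfolding good_def by auto
  qed
qed

lemma good_subset:
  assumes "good L R" "k < length R"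
  shows "snd (ee L R k) \<subseteq> carrier D6"
proof -
  have sg: "subgroup (set (L!fst (R!k))) D6" using assms by (auto simp: good_def)
  have rc: "snd (R!k) \<in> carrier D6" using assms by (auto simp: good_def)
  show ?thesis unfolding ee_def using D.l_coset_subset_G[OF subgroup.subset[OF sg] rc] by simp
qed

definition permok :: "el list list \<Rightarrow> (nat \<times> el) list \<Rightarrow> el \<Rightarrow> nat list \<Rightarrow> bool" where
  "permok L R h p \<longleftrightarrow> length p = length R \<and> distinct p \<and> list_all (\<lambda>j. j < length R) p \<and>
     list_all (\<lambda>k. fst (R!(p!k)) = fst (R!k) \<and> inco (D6_mult h (snd (R!k))) (snd (R!(p!k))) (L ! fst (R!k)))
       [0..<length R]"

lemma permok_act:
  assumes "good L R" "permok L R h p" "h \<in> carrier D6" "k < length R"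
  shows "ee L R (p!k) = (fst (ee L R k), h <#\<^bsub>D6\<^esub> snd (ee L R k))"
proof -
  let ?i = "fst (R!k)"
  have c: "fst (R!(p!k)) = ?i" "inco (D6_mult h (snd (R!k))) (snd (R!(p!k))) (L!?i)"
    using assms(2,4) by (auto simp: permok_def list_all_iff)
  have pk: "p!k < length R" using assms(2,4) by (auto simp: permok_def list_all_iff)
  have sg: "subgroup (set (L!?i)) D6" using assms by (auto simp: good_def)
  have rc: "snd (R!k) \<in> carrier D6" using assms by (auto simp: good_def)
  have rc': "snd (R!(p!k)) \<in> carrier D6" using assms pk by (auto simp: good_def)
  have "h <#\<^bsub>D6\<^esub> snd (ee L R k) = (h \<otimes>\<^bsub>D6\<^esub> snd (R!k)) <#\<^bsub>D6\<^esub> set (L!?i)"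
    unfolding ee_def using D.lcos_m_assoc[OF subgroup.subset[OF sg] assms(3) rc] by simp
  also have "\<dots> = snd (R!(p!k)) <#\<^bsub>D6\<^esub> set (L!?i)"
    using D.l_repr_independence[OF _ rc' sg] c(2) by (simp add: inco_iff)
  finally show ?thesis unfolding ee_def using c(1) by simp
qed

lemma permok_bij:
  assumes "permok L R h p"
  shows "bij_betw (\<lambda>k. p!k) {0..<length R} {0..<length R}"
proof -
  have inj: "inj_on (\<lambda>k. p!k) {0..<length R}"
    using assms by (auto simp: permok_def inj_on_def nth_eq_iff_index_eq)
  have sub: "(\<lambda>k. p!k) ` {0..<length R} \<subseteq> {0..<length R}"
    using assms by (auto simp: permok_def list_all_iff)
  show ?thesis using endo_inj_surj[OF _ sub inj] inj by (simp add: bij_betw_def)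
qed


definition lin :: "int list list \<Rightarrow> el list list \<Rightarrow> (nat \<times> el) list \<Rightarrow> el list list \<Rightarrow> (nat \<times> el) list
   \<Rightarrow> (nat \<times> el set \<Rightarrow> int) \<Rightarrow> (nat \<times> el set \<Rightarrow> int)" where
  "lin A L R L' R' f = (\<lambda>y. if y \<in> perm_set D6 (map set L')
     then (\<Sum>k\<in>{0..<length R}. A ! (inv_into {0..<length R'} (ee L' R') y) ! k * f (ee L R k)) else 0)"

lemma good_ee_in: "good L R \<Longrightarrow> k < length R \<Longrightarrow> ee L R k \<in> perm_set D6 (map set L)"
  using good_PS by auto

lemma lin_ee:
  assumes "good L' R'" "a < length R'"
  shows "lin A L R L' R' f (ee L' R' a) = (\<Sum>k\<in>{0..<length R}. A ! a ! k * f (ee L R k))"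
  using good_ee_in[OF assms] inv_into_f_f[OF good_inj[OF assms(1)]] assms(2)
  by (simp add: lin_def)

lemma lin_in: "lin A L R L' R' f \<in> perm_lattice D6 (map set L')"
  by (simp add: lin_def perm_lattice_def)

lemma lin_add: "lin A L R L' R' (\<lambda>x. f x + h x) = (\<lambda>x. lin A L R L' R' f x + lin A L R L' R' h x)"
  by (auto simp: lin_def distrib_left sum.distrib)

lemma lin_smult: "lin A L R L' R' (\<lambda>x. c * f x) = (\<lambda>x. c * lin A L R L' R' f x)"
  by (auto simp: lin_def sum_distrib_left mult.left_commute)

definition mcheck :: "int list list \<Rightarrow> int list list \<Rightarrow> nat \<Rightarrow> nat \<Rightarrow> bool" where
  "mcheck B A n m = list_all (\<lambda>a. list_all (\<lambda>l. sum_list (map (\<lambda>k. B!a!k * A!k!l) [0..<m]) = (if a = l then 1 else 0)) [0..<n]) [0..<n]"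

lemma lin_inv:
  assumes gd: "good L R" "good L' R'" and mc: "mcheck B A (length R) (length R')"
    and f: "f \<in> perm_lattice D6 (map set L)"
  shows "lin B L' R' L R (lin A L R L' R' f) = f"
proof
  fix y
  show "lin B L' R' L R (lin A L R L' R' f) y = f y"
  proof (cases "y \<in> perm_set D6 (map set L)")
    case False
    then show ?thesis using f by (cases y) (auto simp: lin_def perm_lattice_def)
  next
    case True
    then obtain a where a: "a < length R" "y = ee L R a" using good_PS[OF gd(1)] by auto
    have mc': "\<And>l. l < length R \<Longrightarrow> (\<Sum>k\<in>{0..<length R'}. B!a!k * A!k!l) = (if a = l then 1 else 0)"
      using mc a(1) by (simp add: mcheck_def list_all_iff sum_set_upt_conv_sum_list_nat[symmetric])
    have "lin B L' R' L R (lin A L R L' R' f) y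
        = (\<Sum>k\<in>{0..<length R'}. B!a!k * (\<Sum>l\<in>{0..<length R}. A!k!l * f (ee L R l)))"
      unfolding a(2) lin_ee[OF gd(1) a(1)] using lin_ee[OF gd(2)] by simp
    also have "\<dots> = (\<Sum>l\<in>{0..<length R}. (\<Sum>k\<in>{0..<length R'}. B!a!k * A!k!l) * f (ee L R l))"
      by (simp add: sum_distrib_left sum_distrib_right mult.assoc sum.swap[of _ "{0..<length R}"])
    also have "\<dots> = (\<Sum>l\<in>{0..<length R}. (if a = l then f (ee L R l) else 0))"
      by (rule sum.cong) (auto simp: mc')
    also have "\<dots> = f y" using a by simp
    finally show ?thesis .
  qed
qed

definition echeck :: "int list list \<Rightarrow> nat list \<Rightarrow> nat list \<Rightarrow> bool" where
  "echeck A p p' = list_all (\<lambda>a. list_all (\<lambda>k. A!(p'!a)!(p!k) = A!a!k) [0..<length p]) [0..<length p']"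

lemma lin_equiv:
  assumes gd: "good L R" "good L' R'" and g: "g \<in> carrier D6"
    and pp: "permok L R (inv\<^bsub>D6\<^esub> g) p" "permok L' R' (inv\<^bsub>D6\<^esub> g) p'"
    and ec: "echeck A p p'"
  shows "lin A L R L' R' (perm_act D6 (map set L) g f) = perm_act D6 (map set L') g (lin A L R L' R' f)"
proof
  fix y
  have h: "inv\<^bsub>D6\<^esub> g \<in> carrier D6" using g by simp
  have lp: "length p = length R" "length p' = length R'" using pp by (auto simp: permok_def)
  show "lin A L R L' R' (perm_act D6 (map set L) g f) y = perm_act D6 (map set L') g (lin A L R L' R' f) y"
  proof (cases "y \<in> perm_set D6 (map set L')")
    case False
    then show ?thesis by (cases y) (simp add: lin_def perm_act_def)
  next
    case True
    then obtain a where a: "a < length R'" "y = ee L' R' a" using good_PS[OF gd(2)] by auto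
    have pa: "p'!a < length R'" using pp(2) a(1) by (auto simp: permok_def list_all_iff)
    have ec': "\<And>k. k < length R \<Longrightarrow> A!(p'!a)!(p!k) = A!a!k"
      using ec a(1) lp by (auto simp: echeck_def list_all_iff)
    have "perm_act D6 (map set L') g (lin A L R L' R' f) y = lin A L R L' R' f (ee L' R' (p'!a))"
      using good_ee_in[OF gd(2) a(1)] permok_act[OF gd(2) pp(2) h a(1)] unfolding a(2)
      by (cases "ee L' R' a") (simp add: perm_act_def)
    also have "\<dots> = (\<Sum>k\<in>{0..<length R}. A!(p'!a)!k * f (ee L R k))"
      by (rule lin_ee[OF gd(2) pa])
    also have "\<dots> = (\<Sum>k\<in>{0..<length R}. A!(p'!a)!(p!k) * f (ee L R (p!k)))"
      using sum.reindex_bij_betw[OF permok_bij[OF pp(1)], of "\<lambda>k. A!(p'!a)!k * f (ee L R k)"] by simp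
    also have "\<dots> = (\<Sum>k\<in>{0..<length R}. A!a!k * perm_act D6 (map set L) g f (ee L R k))"
    proof (rule sum.cong)
      fix k assume k: "k \<in> {0..<length R}"
      have kk: "k < length R" using k by simp
      have m: "ee L R k \<in> perm_set D6 (map set L)" by (rule good_ee_in[OF gd(1) kk])
      have e: "ee L R (p!k) = (fst (ee L R k), inv\<^bsub>D6\<^esub> g <#\<^bsub>D6\<^esub> snd (ee L R k))"
        by (rule permok_act[OF gd(1) pp(1) h kk])
      obtain i C where ic: "ee L R k = (i, C)" by fastforce
      have "perm_act D6 (map set L) g f (ee L R k) = f (ee L R (p!k))"
        using m e unfolding ic by (simp add: perm_act_def)
      then show "A!(p'!a)!(p!k) * f (ee L R (p!k)) = A!a!k * perm_act D6 (map set L) g f (ee L R k)"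
        using ec' k by simp
    qed simp
    also have "\<dots> = lin A L R L' R' (perm_act D6 (map set L) g f) y"
      using lin_ee[OF gd(2) a(1)] a(2) by simp
    finally show ?thesis by simp
  qed
qed


lemma cosets_sub:
  assumes "(i, C) \<in> perm_set D6 Hs" "\<forall>i<length Hs. subgroup (Hs!i) D6"
  shows "\<exists>x\<in>carrier D6. C = x <#\<^bsub>D6\<^esub> (Hs!i) \<and> i < length Hs \<and> subgroup (Hs!i) D6"
  using assms by (auto simp: perm_set_def left_cosets_def)

lemma act_comp:
  assumes sg: "\<forall>i<length Hs. subgroup (Hs!i) D6" and g: "g \<in> carrier D6" and h: "h \<in> carrier D6"
  shows "perm_act D6 Hs (g \<otimes>\<^bsub>D6\<^esub> h) f = perm_act D6 Hs g (perm_act D6 Hs h f)"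
proof
  fix y :: "nat \<times> el set"
  obtain i C where y: "y = (i, C)" by fastforce
  show "perm_act D6 Hs (g \<otimes>\<^bsub>D6\<^esub> h) f y = perm_act D6 Hs g (perm_act D6 Hs h f) y"
  proof (cases "(i, C) \<in> perm_set D6 Hs")
    case False then show ?thesis unfolding y by (simp add: perm_act_def)
  next
    case True
    then obtain x where x: "x \<in> carrier D6" "C = x <#\<^bsub>D6\<^esub> (Hs!i)" "i < length Hs" "subgroup (Hs!i) D6"
      using cosets_sub[OF _ sg] by blast
    have Hc: "Hs!i \<subseteq> carrier D6" using x(4) subgroup.subset by blast
    have Cc: "C \<subseteq> carrier D6" using D.l_coset_subset_G[OF Hc x(1)] x(2) by simp
    have ig: "inv\<^bsub>D6\<^esub> g \<in> carrier D6" "inv\<^bsub>D6\<^esub> h \<in> carrier D6" using g h by simp_all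
    have e1: "inv\<^bsub>D6\<^esub> g <#\<^bsub>D6\<^esub> C = (inv\<^bsub>D6\<^esub> g \<otimes>\<^bsub>D6\<^esub> x) <#\<^bsub>D6\<^esub> (Hs!i)"
      using D.lcos_m_assoc[OF Hc ig(1) x(1)] x(2) by simp
    have mem: "(i, inv\<^bsub>D6\<^esub> g <#\<^bsub>D6\<^esub> C) \<in> perm_set D6 Hs"
      unfolding e1 perm_set_def left_cosets_def using x(1,3) ig(1) by blast
    have e2: "inv\<^bsub>D6\<^esub> h <#\<^bsub>D6\<^esub> (inv\<^bsub>D6\<^esub> g <#\<^bsub>D6\<^esub> C) = inv\<^bsub>D6\<^esub> (g \<otimes>\<^bsub>D6\<^esub> h) <#\<^bsub>D6\<^esub> C"
      using D.lcos_m_assoc[OF Cc ig(2) ig(1)] D.inv_mult_group[OF g h] by simp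
    show ?thesis unfolding y using True mem e2 by (simp add: perm_act_def)
  qed
qed

lemma act_one:
  assumes sg: "\<forall>i<length Hs. subgroup (Hs!i) D6" and f: "f \<in> perm_lattice D6 Hs"
  shows "perm_act D6 Hs \<one>\<^bsub>D6\<^esub> f = f"
proof
  fix y :: "nat \<times> el set"
  obtain i C where y: "y = (i, C)" by fastforce
  show "perm_act D6 Hs \<one>\<^bsub>D6\<^esub> f y = f y"
  proof (cases "(i, C) \<in> perm_set D6 Hs")
    case False then show ?thesis using f unfolding y by (simp add: perm_act_def perm_lattice_def)
  next
    case True
    then obtain x where x: "x \<in> carrier D6" "C = x <#\<^bsub>D6\<^esub> (Hs!i)" "i < length Hs" "subgroup (Hs!i) D6"
      using cosets_sub[OF _ sg] by blast
    have Hc: "Hs!i \<subseteq> carrier D6" using x(4) subgroup.subset by blast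
    have Cc: "C \<subseteq> carrier D6" using D.l_coset_subset_G[OF Hc x(1)] x(2) by simp
    have "inv\<^bsub>D6\<^esub> \<one>\<^bsub>D6\<^esub> <#\<^bsub>D6\<^esub> C = C" using D.lcos_mult_one[OF Cc] D.inv_one by simp
    then show ?thesis unfolding y using True by (simp add: perm_act_def)
  qed
qed

lemma act_in: "perm_act D6 Hs g f \<in> perm_lattice D6 Hs"
  by (auto simp: perm_act_def perm_lattice_def)

section \<open>Generated subgroups\<close>

definition sgcheck :: "el list \<Rightarrow> bool" where
  "sgcheck L \<longleftrightarrow> L \<noteq> [] \<and> list_all (\<lambda>x. x \<in> set cl) L \<and>
     list_all (\<lambda>a. list_all (\<lambda>b. D6_mult a b \<in> set L) L) L \<and>
     list_all (\<lambda>a. list_ex (\<lambda>b. D6_mult b a = (0, False)) L) L"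

lemma sgcheck_sub: assumes "sgcheck L" shows "subgroup (set L) D6"
proof (rule D.subgroupI)
  show "set L \<subseteq> carrier D6" using assms by (auto simp: sgcheck_def list_all_iff carrier_cl)
  show "set L \<noteq> {}" using assms by (simp add: sgcheck_def)
  fix a assume a: "a \<in> set L"
  then obtain b where b: "b \<in> set L" "D6_mult b a = (0, False)"
    using assms by (auto simp: sgcheck_def list_all_iff list_ex_iff)
  have "a \<in> carrier D6" "b \<in> carrier D6" using assms a b by (auto simp: sgcheck_def list_all_iff carrier_cl)
  then have "inv\<^bsub>D6\<^esub> a = b" using D.inv_equality b(2) by simp
  then show "inv\<^bsub>D6\<^esub> a \<in> set L" using b by simp
next
  fix a b assume "a \<in> set L" "b \<in> set L"
  then show "a \<otimes>\<^bsub>D6\<^esub> b \<in> set L" using assms by (auto simp: sgcheck_def list_all_iff)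
qed

definition chain :: "el list \<Rightarrow> el list \<Rightarrow> bool" where
  "chain Sl L \<longleftrightarrow> L \<noteq> [] \<and> L!0 = (0, False) \<and>
     list_all (\<lambda>k. list_ex (\<lambda>j. list_ex (\<lambda>t. L!k = D6_mult (L!j) t) Sl) [0..<k]) [1..<length L]"

lemma chain_gen:
  assumes "chain Sl L"
  shows "set L \<subseteq> generate D6 (set Sl)"
proof -
  have "\<forall>k<length L. L!k \<in> generate D6 (set Sl)"
  proof (intro allI)
    fix k show "k < length L \<longrightarrow> L!k \<in> generate D6 (set Sl)"
    proof (induction k rule: less_induct)
      case (less k)
      show ?case
      proof (cases "k = 0")
        case True then show ?thesis using assms generate.one[of D6 "set Sl"] by (simp add: chain_def)
      next
        case False
        show ?thesis
        proof
          assume k: "k < length L"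
          have "\<exists>j\<in>set [0..<k]. \<exists>t\<in>set Sl. L!k = D6_mult (L!j) t"
            using assms False k unfolding chain_def list_all_iff list_ex_iff by simp
          then obtain j t where jt0: "j \<in> set [0..<k]" "t \<in> set Sl" "L!k = D6_mult (L!j) t"
            by blast
          then have jt: "j < k" "t \<in> set Sl" "L!k = D6_mult (L!j) t" by simp_all
          have "L!j \<in> generate D6 (set Sl)" using less jt k by simp
          then have "L!j \<otimes>\<^bsub>D6\<^esub> t \<in> generate D6 (set Sl)"
            using generate.eng generate.incl jt(2) by metis
          then show "L!k \<in> generate D6 (set Sl)" using jt by simp
        qed
      qed
    qed
  qed
  then show ?thesis by (metis in_set_conv_nth subsetI)
qed

lemma gen_eq:
  assumes "sgcheck L" "chain Sl L" "list_all (\<lambda>x. x \<in> set L) Sl"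
  shows "generate D6 (set Sl) = set L"
  using D.generate_subgroup_incl[OF _ sgcheck_sub[OF assms(1)]] chain_gen[OF assms(2)] assms(3)
  by (auto simp: list_all_iff)


definition goodc :: "el list list \<Rightarrow> (nat \<times> el) list \<Rightarrow> bool" where
  "goodc L R \<longleftrightarrow> list_all sgcheck L \<and>
     list_all (\<lambda>k. fst (R!k) < length L \<and> snd (R!k) \<in> set cl) [0..<length R] \<and>
     list_all (\<lambda>i. list_all (\<lambda>g. list_ex (\<lambda>k. fst (R!k) = i \<and> inco g (snd (R!k)) (L!i)) [0..<length R]) cl) [0..<length L] \<and>
     list_all (\<lambda>k. list_all (\<lambda>k'. k \<noteq> k' \<longrightarrow> fst (R!k) = fst (R!k') \<longrightarrow>
         \<not> inco (snd (R!k)) (snd (R!k')) (L ! fst (R!k))) [0..<length R]) [0..<length R]"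

lemma goodc_good: assumes "goodc L R" shows "good L R"
  unfolding good_def
proof (intro conjI allI impI ballI)
  fix i assume "i < length L"
  then have "sgcheck (L!i)" using assms by (auto simp: goodc_def list_all_iff)
  then show "subgroup (set (L!i)) D6" by (rule sgcheck_sub)
next
  fix k assume "k < length R"
  then show "fst (R!k) < length L"
    using assms by (auto simp: goodc_def list_all_iff carrier_cl)
next
  fix k assume "k < length R"
  then show "snd (R!k) \<in> carrier D6"
    using assms by (auto simp: goodc_def list_all_iff carrier_cl)
next
  fix i g assume i: "i < length L" and g: "g \<in> carrier D6"
  have A: "\<forall>i\<in>set [0..<length L]. \<forall>g\<in>set cl. \<exists>k\<in>set [0..<length R]. fst (R!k) = i \<and> inco g (snd (R!k)) (L!i)"
    using assms unfolding goodc_def list_all_iff list_ex_iff by blast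
  have i': "i \<in> set [0..<length L]" using i by simp
  have g': "g \<in> set cl" using g carrier_cl by simp
  obtain k where k: "k \<in> set [0..<length R]" "fst (R!k) = i \<and> inco g (snd (R!k)) (L!i)"
    using A i' g' by blast
  then show "\<exists>k<length R. fst (R!k) = i \<and> inco g (snd (R!k)) (L!i)" by auto
next
  fix k k' assume k: "k < length R" and k': "k' < length R" and ne: "k \<noteq> k'" and f: "fst (R!k) = fst (R!k')"
  have A: "\<forall>k\<in>set [0..<length R]. \<forall>k'\<in>set [0..<length R]. k \<noteq> k' \<longrightarrow> fst (R!k) = fst (R!k') \<longrightarrow>
         \<not> inco (snd (R!k)) (snd (R!k')) (L ! fst (R!k))"
    using assms unfolding goodc_def list_all_iff by blast
  have "k \<in> set [0..<length R]" "k' \<in> set [0..<length R]" using k k' by simp_all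
  then show "\<not> inco (snd (R!k)) (snd (R!k')) (L ! fst (R!k))" using A ne f by blast
qed

lemma good_H: "good hl repH" by (rule goodc_good) code_simp
lemma good_K: "good kl repK" by (rule goodc_good) code_simp

lemma inv_r: "inv\<^bsub>D6\<^esub> (1, False) = (5, False)"
  by (rule D.inv_equality) (auto simp: D6_mult_def D6_carrier)
lemma inv_s: "inv\<^bsub>D6\<^esub> (0, True) = (0, True)"
  by (rule D.inv_equality) (auto simp: D6_mult_def D6_carrier)

lemma permHr: "permok hl repH (5, False) pHr" by code_simp
lemma permKr: "permok kl repK (5, False) pKr" by code_simp
lemma permHs: "permok hl repH (0, True) pHs" by code_simp
lemma permKs: "permok kl repK (0, True) pKs" by code_simp

lemma echr: "echeck MM pHr pKr" by code_simp
lemma echs: "echeck MM pHs pKs" by code_simp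

lemma mc1: "mcheck NN MM (length repH) (length repK)" by code_simp
lemma mc2: "mcheck MM NN (length repK) (length repH)" by code_simp


definition gcheck :: "el list \<Rightarrow> el list \<Rightarrow> bool" where
  "gcheck Sl L \<longleftrightarrow> sgcheck L \<and> chain Sl L \<and> list_all (\<lambda>x. x \<in> set L) Sl"

lemma gen_lemma: "gcheck Sl L \<Longrightarrow> A = set Sl \<Longrightarrow> generate D6 A = set L"
  using gen_eq by (auto simp: gcheck_def)

lemma genH0: "generate D6 {} = set (hl!0)"
  by (rule gen_lemma[of "[]"]) (code_simp, simp)
lemma genH1: "generate D6 {(3,False),(0,True)} = set (hl!1)"
  by (rule gen_lemma[of "[(3,False),(0,True)]"]) (code_simp, simp)
lemma genH3: "generate D6 {(1,False)} = set (hl!3)"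
  by (rule gen_lemma[of "[(1,False)]"]) (code_simp, simp)
lemma genH4: "generate D6 {(2,False),(0,True)} = set (hl!4)"
  by (rule gen_lemma[of "[(2,False),(0,True)]"]) (code_simp, simp)
lemma genH5: "generate D6 {(2,False),(1,True)} = set (hl!5)"
  by (rule gen_lemma[of "[(2,False),(1,True)]"]) (code_simp, simp)
lemma genK0: "generate D6 {(3,False)} = set (kl!0)"
  by (rule gen_lemma[of "[(3,False)]"]) (code_simp, simp)
lemma genK1: "generate D6 {(0,True)} = set (kl!1)"
  by (rule gen_lemma[of "[(0,True)]"]) (code_simp, simp)
lemma genK2: "generate D6 {(1,True)} = set (kl!2)"
  by (rule gen_lemma[of "[(1,True)]"]) (code_simp, simp)
lemma genK3: "generate D6 {(2,False)} = set (kl!3)"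
  by (rule gen_lemma[of "[(2,False)]"]) (code_simp, simp)
lemma genG: "generate D6 {(1,False),(0,True)} = carrier D6"
  unfolding carrier_cl by (rule gen_lemma[of "[(1,False),(0,True)]"]) (code_simp, simp)

lemma mapH: "map set hl = [set (hl!0), set (hl!1), set (hl!1), set (hl!3), set (hl!4), set (hl!5)]"
  by (simp add: hl_def)
lemma mapK: "map set kl = [set (kl!0), set (kl!1), set (kl!2), set (kl!3), carrier D6, carrier D6]"
  by (simp add: kl_def carrier_cl cl_def)

lemma powers0: "rD6 = (1,False)" "sD6 = (0,True)" by (simp_all add: rD6_def sD6_def)
lemma powers: "(1,False) [^]\<^bsub>D6\<^esub> (2::nat) = (2,False)" "(1,False) [^]\<^bsub>D6\<^esub> (3::nat) = (3,False)"
  "(1,False) \<otimes>\<^bsub>D6\<^esub> (0,True) = (1,True)"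
  by (simp_all add: rD6_def sD6_def numeral_2_eq_2 numeral_3_eq_3 D6_mult_def)

lemma chain_closed:
  assumes "chain Sl L" "(0, False) \<in> E" "set Sl \<subseteq> E" "\<And>x y. x \<in> E \<Longrightarrow> y \<in> E \<Longrightarrow> D6_mult x y \<in> E"
  shows "set L \<subseteq> E"
proof -
  have "\<forall>k<length L. L!k \<in> E"
  proof (intro allI)
    fix k show "k < length L \<longrightarrow> L!k \<in> E"
    proof (induction k rule: less_induct)
      case (less k)
      show ?case
      proof (cases "k = 0")
        case True then show ?thesis using assms by (simp add: chain_def)
      next
        case False
        show ?thesis
        proof
          assume k: "k < length L"
          have "\<exists>j\<in>set [0..<k]. \<exists>t\<in>set Sl. L!k = D6_mult (L!j) t"
            using assms False k unfolding chain_def list_all_iff list_ex_iff by simp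
          then obtain j t where jt0: "j \<in> set [0..<k]" "t \<in> set Sl" "L!k = D6_mult (L!j) t"
            by blast
          then have jt: "j < k" "t \<in> set Sl" "L!k = D6_mult (L!j) t" by simp_all
          have "L!j \<in> E" using less jt k by simp
          then show "L!k \<in> E" using jt assms(3,4) by (metis subsetD)
        qed
      qed
    qed
  qed
  then show ?thesis by (metis in_set_conv_nth subsetI)
qed

lemma chain_cl: "chain [(1,False),(0,True)] cl" by code_simp

lemma main_iso: "isomorphic_lattices D6 (map set hl) (map set kl)"
proof -
  define phi where "phi = lin MM hl repH kl repK"
  define psi where "psi = lin NN kl repK hl repH"
  let ?PH = "perm_lattice D6 (map set hl)"
  let ?PK = "perm_lattice D6 (map set kl)"
  have sgH: "\<forall>i<length (map set hl). subgroup (map set hl ! i) D6"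
    using good_H by (simp add: good_def)
  have sgK: "\<forall>i<length (map set kl). subgroup (map set kl ! i) D6"
    using good_K by (simp add: good_def)
  have bij: "bij_betw phi ?PH ?PK"
  proof (rule bij_betwI[where g = psi])
    show "phi \<in> ?PH \<rightarrow> ?PK" unfolding phi_def using lin_in by blast
    show "psi \<in> ?PK \<rightarrow> ?PH" unfolding psi_def using lin_in by blast
    show "psi (phi x) = x" if "x \<in> ?PH" for x
      unfolding phi_def psi_def by (rule lin_inv[OF good_H good_K mc1 that])
    show "phi (psi y) = y" if "y \<in> ?PK" for y
      unfolding phi_def psi_def by (rule lin_inv[OF good_K good_H mc2 that])
  qed
  define E where "E = {g \<in> carrier D6. \<forall>f\<in>?PH. phi (perm_act D6 (map set hl) g f) = perm_act D6 (map set kl) g (phi f)}"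
  have Ec: "E \<subseteq> carrier D6" unfolding E_def by blast
  have "set cl \<subseteq> E"
  proof (rule chain_closed[OF chain_cl])
    show "(0, False) \<in> E" unfolding E_def
      using act_one[OF sgH] act_one[OF sgK] lin_in unfolding phi_def by (simp add: D6_carrier)
  next
    have r: "(1,False) \<in> E"
    proof -
      let ?h = "(1,False)::el"
      have "?h \<in> carrier D6" by (simp add: D6_carrier)
      moreover have "phi (perm_act D6 (map set hl) ?h f) = perm_act D6 (map set kl) ?h (phi f)" for f
        unfolding phi_def using lin_equiv[OF good_H good_K \<open>?h \<in> carrier D6\<close> _ _ echr] permHr permKr inv_r
        by simp
      ultimately show ?thesis unfolding E_def by blast
    qed
    have s: "(0,True) \<in> E"
    proof -
      let ?h = "(0,True)::el"
      have "?h \<in> carrier D6" by (simp add: D6_carrier)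
      moreover have "phi (perm_act D6 (map set hl) ?h f) = perm_act D6 (map set kl) ?h (phi f)" for f
        unfolding phi_def using lin_equiv[OF good_H good_K \<open>?h \<in> carrier D6\<close> _ _ echs] permHs permKs inv_s
        by simp
      ultimately show ?thesis unfolding E_def by blast
    qed
    show "set [(1,False),(0,True)] \<subseteq> E" using r s by simp
  next
    fix g1 g2 assume g1: "g1 \<in> E" and g2: "g2 \<in> E"
    have c: "g1 \<in> carrier D6" "g2 \<in> carrier D6" using g1 g2 Ec by auto
    have "phi (perm_act D6 (map set hl) (g1 \<otimes>\<^bsub>D6\<^esub> g2) f) = perm_act D6 (map set kl) (g1 \<otimes>\<^bsub>D6\<^esub> g2) (phi f)"
      if f: "f \<in> ?PH" for f
    proof -
      have "phi (perm_act D6 (map set hl) (g1 \<otimes>\<^bsub>D6\<^esub> g2) f)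
          = phi (perm_act D6 (map set hl) g1 (perm_act D6 (map set hl) g2 f))"
        using act_comp[OF sgH c] by simp
      also have "\<dots> = perm_act D6 (map set kl) g1 (phi (perm_act D6 (map set hl) g2 f))"
        using g1 act_in unfolding E_def by blast
      also have "\<dots> = perm_act D6 (map set kl) g1 (perm_act D6 (map set kl) g2 (phi f))"
        using g2 f unfolding E_def by auto
      also have "\<dots> = perm_act D6 (map set kl) (g1 \<otimes>\<^bsub>D6\<^esub> g2) (phi f)"
        using act_comp[OF sgK c] by simp
      finally show ?thesis .
    qed
    moreover have "g1 \<otimes>\<^bsub>D6\<^esub> g2 \<in> carrier D6" using c by (rule D.m_closed)
    ultimately show "D6_mult g1 g2 \<in> E" unfolding E_def by simp
  qed
  then have eqv: "\<forall>g\<in>carrier D6. \<forall>f\<in>?PH. phi (perm_act D6 (map set hl) g f) = perm_act D6 (map set kl) g (phi f)"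
    unfolding carrier_cl[symmetric] E_def by blast
  have "lattice_iso D6 (map set hl) (map set kl) phi"
    unfolding lattice_iso_def using bij eqv unfolding phi_def by (simp add: lin_add lin_smult)
  then show ?thesis unfolding isomorphic_lattices_def by blast
qed

theorem proposition6p3:
  defines "r \<equiv> rD6" and "s \<equiv> sD6"
  defines "gen \<equiv> \<lambda>S. generate D6 S"
  shows "isomorphic_lattices D6
    [ gen {},
      gen {r [^]\<^bsub>D6\<^esub> (3::nat), s}, gen {r [^]\<^bsub>D6\<^esub> (3::nat), s},
      gen {r},
      gen {r [^]\<^bsub>D6\<^esub> (2::nat), s},
      gen {r [^]\<^bsub>D6\<^esub> (2::nat), r \<otimes>\<^bsub>D6\<^esub> s} ]
    [ gen {r [^]\<^bsub>D6\<^esub> (3::nat)},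
      gen {s},
      gen {r \<otimes>\<^bsub>D6\<^esub> s},
      gen {r [^]\<^bsub>D6\<^esub> (2::nat)},
      carrier D6, carrier D6 ]"
proof -
  have "[ gen {},
      gen {r [^]\<^bsub>D6\<^esub> (3::nat), s}, gen {r [^]\<^bsub>D6\<^esub> (3::nat), s},
      gen {r},
      gen {r [^]\<^bsub>D6\<^esub> (2::nat), s},
      gen {r [^]\<^bsub>D6\<^esub> (2::nat), r \<otimes>\<^bsub>D6\<^esub> s} ] = map set hl"
    unfolding mapH assms powers0 powers by (simp only: genH0 genH1 genH3 genH4 genH5)
  moreover have "[ gen {r [^]\<^bsub>D6\<^esub> (3::nat)},
      gen {s},
      gen {r \<otimes>\<^bsub>D6\<^esub> s},
      gen {r [^]\<^bsub>D6\<^esub> (2::nat)},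
      carrier D6, carrier D6 ] = map set kl"
    unfolding mapK assms powers0 powers by (simp only: genK0 genK1 genK2 genK3)
  ultimately show ?thesis using main_iso by simp
qed

end
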